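(* Let $(L_i)_{i\in I}$ be a family of lattices with zero such that $L_i\cap L_j=\{0\}$ for all distinct $i,j\in I$, and let $L=\coprod^0_{i\in I}L_i$, with each $L_i$ identified with its canonical copy in $L$; put $P=\bigcup_{i\in I}L_i\subseteq L$. Adjoin a new largest element $\infty$ to $L$ and set $\overline{L}_i=L_i\cup\{\infty\}$. Then for each $x\in L$ and each $i\in I$ there exist a largest element $x_{(i)}$ of $L_i$ below $x$ and a least element $x^{(i)}$ of $\overline{L}_i$ above $x$ (with respect to the ordering of $L\cup\{\infty\}$), and for all $x,y\in L$ and $i\in I$: (a) $p_{(i)}=p^{(i)}=p$ if $p\in L_i$; (b) $p_{(i)}=0$ and $p^{(i)}=\infty$ if $p\in P\setminus L_i$; (c) $(x\vee y)_{(i)}=x_{(i)}\vee y_{(i)}$ and $(x\wedge y)_{(i)}=x_{(i)}\wedge y_{(i)}$; (d) $(x\vee y)^{(i)}=x^{(i)}\vee y^{(i)}$; (e) $(x\wedge y)^{(i)}=0$ if $x^{(j)}\wedge y^{(j)}=0$ for some $j\in I$, and $(x\wedge y)^{(i)}=x^{(i)}\wedge y^{(i)}$ otherwise. (Joins and meets on the right-hand sides are computed in $\overline{L}_i$, where $\infty$ is the top element.)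
   Context: $\coprod^0_{i\in I}L_i$ denotes the coproduct of a family of lattices with zero in the category of lattices with zero and zero-preserving lattice homomorphisms; the canonical maps $L_i\to L$ are embeddings and identify the zeros of all $L_i$. *)

theory Defs
  imports "HOL-Algebra.Lattice"
begin

text \<open>The coproduct (in the category of
lattices with zero) of a family of lattices with a common zero z, pairwise meeting
only in z, is the lattice presented by the generators in the union P of the
carriers (together with z), subject to the relations of each L_i (joins and meets
of elements of L_i agree with those computed in L_i) and z being least.
An element of the coproduct is represented by a term; two terms denote the same
element iff they are related both ways by cop_le.\<close>

datatype 'a lterm = Gen 'a | Join "'a lterm" "'a lterm" | Meet "'a lterm" "'a lterm"

fun gens :: "'a lterm \<Rightarrow> 'a set" where
  "gens (Gen a) = {a}"
| "gens (Join s t) = gens s \<union> gens t"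
| "gens (Meet s t) = gens s \<union> gens t"

definition cop_gens :: "'i set \<Rightarrow> ('i \<Rightarrow> 'a gorder) \<Rightarrow> 'a \<Rightarrow> 'a set" where
  "cop_gens I Ls z = insert z (\<Union>i\<in>I. carrier (Ls i))"

definition cop_terms :: "'i set \<Rightarrow> ('i \<Rightarrow> 'a gorder) \<Rightarrow> 'a \<Rightarrow> 'a lterm set" where
  "cop_terms I Ls z = {t. gens t \<subseteq> cop_gens I Ls z}"

inductive cop_le :: "'i set \<Rightarrow> ('i \<Rightarrow> 'a gorder) \<Rightarrow> 'a \<Rightarrow> 'a lterm \<Rightarrow> 'a lterm \<Rightarrow> bool"
  for I Ls z where
  refl: "cop_le I Ls z t t"
| trans: "cop_le I Ls z s t \<Longrightarrow> cop_le I Ls z t u \<Longrightarrow> cop_le I Ls z s u"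
| join_ub1: "cop_le I Ls z s (Join s t)"
| join_ub2: "cop_le I Ls z t (Join s t)"
| join_lub: "cop_le I Ls z s u \<Longrightarrow> cop_le I Ls z t u \<Longrightarrow> cop_le I Ls z (Join s t) u"
| meet_lb1: "cop_le I Ls z (Meet s t) s"
| meet_lb2: "cop_le I Ls z (Meet s t) t"
| meet_glb: "cop_le I Ls z u s \<Longrightarrow> cop_le I Ls z u t \<Longrightarrow> cop_le I Ls z u (Meet s t)"
| gen_join1: "i \<in> I \<Longrightarrow> a \<in> carrier (Ls i) \<Longrightarrow> b \<in> carrier (Ls i) \<Longrightarrow>
     cop_le I Ls z (Gen (a \<squnion>\<^bsub>Ls i\<^esub> b)) (Join (Gen a) (Gen b))"
| gen_join2: "i \<in> I \<Longrightarrow> a \<in> carrier (Ls i) \<Longrightarrow> b \<in> carrier (Ls i) \<Longrightarrow>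
     cop_le I Ls z (Join (Gen a) (Gen b)) (Gen (a \<squnion>\<^bsub>Ls i\<^esub> b))"
| gen_meet1: "i \<in> I \<Longrightarrow> a \<in> carrier (Ls i) \<Longrightarrow> b \<in> carrier (Ls i) \<Longrightarrow>
     cop_le I Ls z (Gen (a \<sqinter>\<^bsub>Ls i\<^esub> b)) (Meet (Gen a) (Gen b))"
| gen_meet2: "i \<in> I \<Longrightarrow> a \<in> carrier (Ls i) \<Longrightarrow> b \<in> carrier (Ls i) \<Longrightarrow>
     cop_le I Ls z (Meet (Gen a) (Gen b)) (Gen (a \<sqinter>\<^bsub>Ls i\<^esub> b))"
| zero_least: "cop_le I Ls z (Gen z) t"

text \<open>L \<union> {\<infinity>}: None is the new top \<infinity>, Some a is the element (Gen a) of L.\<close>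
definition cop_le_top :: "'i set \<Rightarrow> ('i \<Rightarrow> 'a gorder) \<Rightarrow> 'a \<Rightarrow> 'a lterm \<Rightarrow> 'a option \<Rightarrow> bool" where
  "cop_le_top I Ls z x u = (case u of None \<Rightarrow> True | Some a \<Rightarrow> cop_le I Ls z x (Gen a))"

definition is_lower_proj :: "'i set \<Rightarrow> ('i \<Rightarrow> 'a gorder) \<Rightarrow> 'a \<Rightarrow> 'i \<Rightarrow> 'a lterm \<Rightarrow> 'a \<Rightarrow> bool" where
  "is_lower_proj I Ls z i x a \<longleftrightarrow> a \<in> carrier (Ls i) \<and> cop_le I Ls z (Gen a) x \<and>
     (\<forall>b\<in>carrier (Ls i). cop_le I Ls z (Gen b) x \<longrightarrow> cop_le I Ls z (Gen b) (Gen a))"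

definition ole_top :: "'i set \<Rightarrow> ('i \<Rightarrow> 'a gorder) \<Rightarrow> 'a \<Rightarrow> 'a option \<Rightarrow> 'a option \<Rightarrow> bool" where
  "ole_top I Ls z u v = (case v of None \<Rightarrow> True
      | Some b \<Rightarrow> (case u of None \<Rightarrow> False | Some a \<Rightarrow> cop_le I Ls z (Gen a) (Gen b)))"

definition bar_carrier :: "'a gorder \<Rightarrow> 'a option set" where
  "bar_carrier K = insert None (Some ` carrier K)"

definition is_upper_proj :: "'i set \<Rightarrow> ('i \<Rightarrow> 'a gorder) \<Rightarrow> 'a \<Rightarrow> 'i \<Rightarrow> 'a lterm \<Rightarrow> 'a option \<Rightarrow> bool" where
  "is_upper_proj I Ls z i x u \<longleftrightarrow> u \<in> bar_carrier (Ls i) \<and> cop_le_top I Ls z x u \<and>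
     (\<forall>v\<in>bar_carrier (Ls i). cop_le_top I Ls z x v \<longrightarrow> ole_top I Ls z u v)"

definition ojoin :: "'a gorder \<Rightarrow> 'a option \<Rightarrow> 'a option \<Rightarrow> 'a option" where
  "ojoin K u v = (case (u, v) of (Some a, Some b) \<Rightarrow> Some (a \<squnion>\<^bsub>K\<^esub> b) | _ \<Rightarrow> None)"

definition omeet :: "'a gorder \<Rightarrow> 'a option \<Rightarrow> 'a option \<Rightarrow> 'a option" where
  "omeet K u v = (case (u, v) of (None, _) \<Rightarrow> v | (_, None) \<Rightarrow> u
                    | (Some a, Some b) \<Rightarrow> Some (a \<sqinter>\<^bsub>K\<^esub> b))"

end

theory Submission imports Defs begin

definition leo :: "('a,'b) gorder_scheme \<Rightarrow> 'a option \<Rightarrow> 'a option \<Rightarrow> bool" where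
  "leo K u v = (case v of None \<Rightarrow> True | Some b \<Rightarrow> (case u of None \<Rightarrow> False | Some a \<Rightarrow> a \<sqsubseteq>\<^bsub>K\<^esub> b))"

definition okC :: "('a,'b) gorder_scheme \<Rightarrow> 'a option \<Rightarrow> bool" where
  "okC K u = (case u of None \<Rightarrow> True | Some a \<Rightarrow> a \<in> carrier K)"

locale zlat = lattice L for L :: "'a gorder" (structure) +
  fixes z assumes zl: "least L z (carrier L)"
begin

lemma zC: "z \<in> carrier L" using zl by (simp add: least_def)
lemma zle: "a \<in> carrier L \<Longrightarrow> z \<sqsubseteq> a" using zl by (simp add: least_def)

lemma join_zero: "a \<in> carrier L \<Longrightarrow> b \<in> carrier L \<Longrightarrow> a \<squnion> b = z \<Longrightarrow> a = z \<and> b = z"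
  by (metis join_left join_right zle zC le_antisym)

lemma zz: "z \<squnion> z = z" "a \<in> carrier L \<Longrightarrow> z \<sqinter> a = z" "a \<in> carrier L \<Longrightarrow> a \<sqinter> z = z"
  by (auto intro!: le_antisym join_le meet_le join_left meet_left meet_right zle zC simp: zC)

lemma leo_refl: "okC L u \<Longrightarrow> leo L u u"
  by (cases u) (auto simp: leo_def okC_def)
lemma leo_trans: "okC L u \<Longrightarrow> okC L v \<Longrightarrow> okC L w \<Longrightarrow> leo L u v \<Longrightarrow> leo L v w \<Longrightarrow> leo L u w"
  by (cases u; cases v; cases w) (auto simp: leo_def okC_def intro: le_trans)
lemma leo_antisym: "okC L u \<Longrightarrow> okC L v \<Longrightarrow> leo L u v \<Longrightarrow> leo L v u \<Longrightarrow> u = v"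
  by (cases u; cases v) (auto simp: leo_def okC_def)
lemma leo_z: "okC L u \<Longrightarrow> leo L (Some z) u"
  by (cases u) (auto simp: leo_def okC_def zle)
lemma leo_None: "leo L u None" by (simp add: leo_def)
lemma leo_Some_z: "okC L u \<Longrightarrow> leo L u (Some z) \<Longrightarrow> u = Some z"
  by (cases u) (auto simp: leo_def okC_def zle zC)

lemma ojoin_ok: "okC L u \<Longrightarrow> okC L v \<Longrightarrow> okC L (ojoin L u v)"
  by (cases u; cases v) (auto simp: ojoin_def okC_def)
lemma omeet_ok: "okC L u \<Longrightarrow> okC L v \<Longrightarrow> okC L (omeet L u v)"
  by (cases u; cases v) (auto simp: omeet_def okC_def)
lemma ojoin_ub1: "okC L u \<Longrightarrow> okC L v \<Longrightarrow> leo L u (ojoin L u v)"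
  by (cases u; cases v) (auto simp: ojoin_def okC_def leo_def join_left)
lemma ojoin_ub2: "okC L u \<Longrightarrow> okC L v \<Longrightarrow> leo L v (ojoin L u v)"
  by (cases u; cases v) (auto simp: ojoin_def okC_def leo_def join_right)
lemma ojoin_lub: "okC L u \<Longrightarrow> okC L v \<Longrightarrow> okC L w \<Longrightarrow> leo L u w \<Longrightarrow> leo L v w \<Longrightarrow> leo L (ojoin L u v) w"
  by (cases u; cases v; cases w) (auto simp: ojoin_def okC_def leo_def join_le)
lemma omeet_lb1: "okC L u \<Longrightarrow> okC L v \<Longrightarrow> leo L (omeet L u v) u"
  by (cases u; cases v) (auto simp: omeet_def okC_def leo_def meet_left)
lemma omeet_lb2: "okC L u \<Longrightarrow> okC L v \<Longrightarrow> leo L (omeet L u v) v"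
  by (cases u; cases v) (auto simp: omeet_def okC_def leo_def meet_right)
lemma omeet_glb: "okC L u \<Longrightarrow> okC L v \<Longrightarrow> okC L w \<Longrightarrow> leo L w u \<Longrightarrow> leo L w v \<Longrightarrow> leo L w (omeet L u v)"
  by (cases u; cases v; cases w) (auto simp: omeet_def okC_def leo_def meet_le)

end

primrec lof :: "'i set \<Rightarrow> ('i \<Rightarrow> 'a gorder) \<Rightarrow> 'a \<Rightarrow> 'i \<Rightarrow> 'a lterm \<Rightarrow> 'a" where
  "lof I Ls z i (Gen a) = (if a \<in> carrier (Ls i) then a else z)"
| "lof I Ls z i (Join x y) = lof I Ls z i x \<squnion>\<^bsub>Ls i\<^esub> lof I Ls z i y"
| "lof I Ls z i (Meet x y) = lof I Ls z i x \<sqinter>\<^bsub>Ls i\<^esub> lof I Ls z i y"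

primrec upf :: "'i set \<Rightarrow> ('i \<Rightarrow> 'a gorder) \<Rightarrow> 'a \<Rightarrow> 'a lterm \<Rightarrow> 'i \<Rightarrow> 'a option" where
  "upf I Ls z (Gen a) i = (if a \<in> carrier (Ls i) then Some a else None)"
| "upf I Ls z (Join x y) i = ojoin (Ls i) (upf I Ls z x i) (upf I Ls z y i)"
| "upf I Ls z (Meet x y) i = (if \<exists>j\<in>I. omeet (Ls j) (upf I Ls z x j) (upf I Ls z y j) = Some z then Some z
       else omeet (Ls i) (upf I Ls z x i) (upf I Ls z y i))"

context
  fixes I :: "'i set" and Ls :: "'i \<Rightarrow> 'a gorder" and z :: 'a
  assumes lat: "\<And>i. i \<in> I \<Longrightarrow> lattice (Ls i)"
    and zero: "\<And>i. i \<in> I \<Longrightarrow> least (Ls i) z (carrier (Ls i))"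
    and disj: "\<And>i j. i \<in> I \<Longrightarrow> j \<in> I \<Longrightarrow> i \<noteq> j \<Longrightarrow> carrier (Ls i) \<inter> carrier (Ls j) = {z}"
begin

lemma Z: "i \<in> I \<Longrightarrow> zlat (Ls i) z"
  by (simp add: zlat_def zlat_axioms_def lat zero)

lemma lof_C: "i \<in> I \<Longrightarrow> lof I Ls z i x \<in> carrier (Ls i)"
proof (induction x)
  case (Gen a) then show ?case using zlat.zC[OF Z] by simp
next
  case (Join x y) interpret zlat "Ls i" z using Z Join.prems by blast
  from Join show ?case by simp
next
  case (Meet x y) interpret zlat "Ls i" z using Z Meet.prems by blast
  from Meet show ?case by simp
qed

lemma upf_ok: "i \<in> I \<Longrightarrow> okC (Ls i) (upf I Ls z x i)"
proof (induction x arbitrary: i)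
  case (Gen a) then show ?case by (simp add: okC_def)
next
  case (Join x y) interpret zlat "Ls i" z using Z Join.prems by blast
  from Join show ?case by (simp add: ojoin_ok)
next
  case (Meet x y) interpret zlat "Ls i" z using Z Meet.prems by blast
  have "okC (Ls i) (upf I Ls z x i)" "okC (Ls i) (upf I Ls z y i)" using Meet by auto
  then have "okC (Ls i) (omeet (Ls i) (upf I Ls z x i) (upf I Ls z y i))" by (rule omeet_ok)
  then show ?case by (simp add: okC_def zC)
qed

lemma upf_Z: "j \<in> I \<Longrightarrow> i \<in> I \<Longrightarrow> upf I Ls z x j = Some z \<Longrightarrow> upf I Ls z x i = Some z"
proof (induction x arbitrary: i j)
  case (Gen a) then show ?case using zlat.zC[OF Z[OF Gen.prems(2)]] by (simp split: if_splits)
next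
  case (Join x y)
  interpret J: zlat "Ls j" z using Z Join.prems by blast
  interpret K: zlat "Ls i" z using Z Join.prems by blast
  obtain a b where ab: "upf I Ls z x j = Some a" "upf I Ls z y j = Some b" "a \<squnion>\<^bsub>Ls j\<^esub> b = z"
    using Join.prems(3) by (simp add: ojoin_def split: option.splits)
  have "a \<in> carrier (Ls j)" "b \<in> carrier (Ls j)" using upf_ok[OF Join.prems(1), of x] upf_ok[OF Join.prems(1), of y] ab
    by (simp_all add: okC_def)
  then have "a = z" "b = z" using J.join_zero ab(3) by blast+
  then have "upf I Ls z x i = Some z" "upf I Ls z y i = Some z"
    using Join.IH[OF Join.prems(1,2)] ab by simp_all
  then show ?case by (simp add: ojoin_def K.zz)
next
  case (Meet x y)
  show ?case
  proof (cases "\<exists>j\<in>I. omeet (Ls j) (upf I Ls z x j) (upf I Ls z y j) = Some z")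
    case True then show ?thesis by simp
  next
    case False with Meet.prems show ?thesis by simp
  qed
qed


lemma G: "k \<in> I \<Longrightarrow> i \<in> I \<Longrightarrow> k \<noteq> i \<Longrightarrow> c \<in> carrier (Ls k) \<Longrightarrow>
  lof I Ls z i (Gen c) = z \<and> upf I Ls z (Gen c) i = (if c = z then Some z else None)"
proof -
  assume a: "k \<in> I" "i \<in> I" "k \<noteq> i" "c \<in> carrier (Ls k)"
  have "c \<in> carrier (Ls i) \<longleftrightarrow> c = z" using disj[of k i] a zlat.zC[OF Z[OF a(2)]] by blast
  then show ?thesis by auto
qed

lemma joinGen: assumes k: "k \<in> I" and ab: "a \<in> carrier (Ls k)" "b \<in> carrier (Ls k)" and i: "i \<in> I"
  shows "upf I Ls z (Join (Gen a) (Gen b)) i = upf I Ls z (Gen (a \<squnion>\<^bsub>Ls k\<^esub> b)) i \<and>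
         lof I Ls z i (Join (Gen a) (Gen b)) = lof I Ls z i (Gen (a \<squnion>\<^bsub>Ls k\<^esub> b))"
proof (cases "i = k")
  case True
  interpret K: zlat "Ls k" z using Z k by blast
  show ?thesis using True ab by (simp add: ojoin_def)
next
  case False
  interpret K: zlat "Ls k" z using Z k by blast
  interpret L: zlat "Ls i" z using Z i by blast
  have c: "a \<squnion>\<^bsub>Ls k\<^esub> b \<in> carrier (Ls k)" using ab by simp
  note Ga = G[OF k i False[symmetric] ab(1)] and Gb = G[OF k i False[symmetric] ab(2)]
    and Gc = G[OF k i False[symmetric] c]
  have "a \<squnion>\<^bsub>Ls k\<^esub> b = z \<longleftrightarrow> a = z \<and> b = z" using K.join_zero ab K.zz(1) by blast
  then show ?thesis using Ga Gb Gc L.zz(1) by (simp add: ojoin_def)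
qed

lemma meetGen: assumes k: "k \<in> I" and ab: "a \<in> carrier (Ls k)" "b \<in> carrier (Ls k)" and i: "i \<in> I"
  shows "upf I Ls z (Meet (Gen a) (Gen b)) i = upf I Ls z (Gen (a \<sqinter>\<^bsub>Ls k\<^esub> b)) i \<and>
         lof I Ls z i (Meet (Gen a) (Gen b)) = lof I Ls z i (Gen (a \<sqinter>\<^bsub>Ls k\<^esub> b))"
proof -
  interpret K: zlat "Ls k" z using Z k by blast
  have c: "a \<sqinter>\<^bsub>Ls k\<^esub> b \<in> carrier (Ls k)" using ab by simp
  have ex: "(\<exists>j\<in>I. omeet (Ls j) (upf I Ls z (Gen a) j) (upf I Ls z (Gen b) j) = Some z)
      \<longleftrightarrow> a \<sqinter>\<^bsub>Ls k\<^esub> b = z"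
  proof
    assume "\<exists>j\<in>I. omeet (Ls j) (upf I Ls z (Gen a) j) (upf I Ls z (Gen b) j) = Some z"
    then obtain j where j: "j \<in> I" "omeet (Ls j) (upf I Ls z (Gen a) j) (upf I Ls z (Gen b) j) = Some z" by blast
    show "a \<sqinter>\<^bsub>Ls k\<^esub> b = z"
    proof (cases "j = k")
      case True then show ?thesis using j ab by (simp add: omeet_def)
    next
      case False
      have "a = z \<or> b = z" using j G[OF k j(1) False[symmetric] ab(1)] G[OF k j(1) False[symmetric] ab(2)]
        by (auto simp: omeet_def split: if_splits)
      then show ?thesis using K.zz ab by auto
    qed
  next
    assume "a \<sqinter>\<^bsub>Ls k\<^esub> b = z"
    then show "\<exists>j\<in>I. omeet (Ls j) (upf I Ls z (Gen a) j) (upf I Ls z (Gen b) j) = Some z"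
      using k ab by (intro bexI[of _ k]) (simp_all add: omeet_def)
  qed
  show ?thesis
  proof (cases "i = k")
    case True
    then show ?thesis using ex ab by (simp add: omeet_def)
  next
    case False
    interpret L: zlat "Ls i" z using Z i by blast
    note Ga = G[OF k i False[symmetric] ab(1)] and Gb = G[OF k i False[symmetric] ab(2)]
      and Gc = G[OF k i False[symmetric] c]
    have "a = z \<or> b = z \<Longrightarrow> a \<sqinter>\<^bsub>Ls k\<^esub> b = z" using K.zz ab by auto
    then show ?thesis using ex Ga Gb Gc L.zz L.zC by (auto simp: omeet_def)
  qed
qed

lemma S_lo: assumes "cop_le I Ls z s t" and i: "i \<in> I" shows "lof I Ls z i s \<sqsubseteq>\<^bsub>Ls i\<^esub> lof I Ls z i t"
proof -
  interpret zlat "Ls i" z using Z i by blast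
  show ?thesis using assms(1)
proof (induction rule: cop_le.induct)
  case (refl t)
  show ?case using lof_C i by simp
next
  case (trans s t u)
  show ?case by (rule le_trans[OF trans.IH(1) trans.IH(2) lof_C[OF i] lof_C[OF i] lof_C[OF i]])
next
  case (join_ub1 s t)
  show ?case using lof_C[OF i] join_ub1 by (simp add: join_left)
next
  case (join_ub2 s t)
  show ?case using lof_C[OF i] join_ub2 by (simp add: join_right)
next
  case (join_lub s u t)
  show ?case using lof_C[OF i] join_lub by (simp add: join_le)
next
  case (meet_lb1 s t)
  show ?case using lof_C[OF i] meet_lb1 by (simp add: meet_left)
next
  case (meet_lb2 s t)
  show ?case using lof_C[OF i] meet_lb2 by (simp add: meet_right)
next
  case (meet_glb u s t)
  show ?case using lof_C[OF i] meet_glb by (simp add: meet_le)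
next
  case (gen_join1 k a b)
  have e: "lof I Ls z i (Join (Gen a) (Gen b)) = lof I Ls z i (Gen (a \<squnion>\<^bsub>Ls k\<^esub> b))" using joinGen[OF gen_join1(1-3) i] by blast
  show ?case unfolding e by (rule le_refl[OF lof_C[OF i]])
next
  case (gen_join2 k a b)
  have e: "lof I Ls z i (Join (Gen a) (Gen b)) = lof I Ls z i (Gen (a \<squnion>\<^bsub>Ls k\<^esub> b))" using joinGen[OF gen_join2(1-3) i] by blast
  show ?case unfolding e by (rule le_refl[OF lof_C[OF i]])
next
  case (gen_meet1 k a b)
  have e: "lof I Ls z i (Meet (Gen a) (Gen b)) = lof I Ls z i (Gen (a \<sqinter>\<^bsub>Ls k\<^esub> b))" using meetGen[OF gen_meet1(1-3) i] by blast
  show ?case unfolding e by (rule le_refl[OF lof_C[OF i]])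
next
  case (gen_meet2 k a b)
  have e: "lof I Ls z i (Meet (Gen a) (Gen b)) = lof I Ls z i (Gen (a \<sqinter>\<^bsub>Ls k\<^esub> b))" using meetGen[OF gen_meet2(1-3) i] by blast
  show ?case unfolding e by (rule le_refl[OF lof_C[OF i]])
next
  case (zero_least t)
  show ?case using lof_C[OF i] zC by (simp add: zle)
qed
qed

lemma upf_Meet_cases: "upf I Ls z (Meet s t) i = Some z \<or> upf I Ls z (Meet s t) i = omeet (Ls i) (upf I Ls z s i) (upf I Ls z t i)"
  by simp

lemma S_up: assumes "cop_le I Ls z s t" shows "\<forall>i\<in>I. leo (Ls i) (upf I Ls z s i) (upf I Ls z t i)"
  using assms
proof (induction rule: cop_le.induct)
  case (refl t) show ?case
  proof (intro ballI)
    fix i assume i: "i \<in> I"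
    interpret zlat "Ls i" z using Z i by blast
    show "leo (Ls i) (upf I Ls z t i) (upf I Ls z t i)" by (rule leo_refl[OF upf_ok[OF i]])
  qed
next
  case (trans s t u) show ?case
  proof (intro ballI)
    fix i assume i: "i \<in> I"
    interpret zlat "Ls i" z using Z i by blast
    show "leo (Ls i) (upf I Ls z s i) (upf I Ls z u i)"
      by (rule leo_trans[OF upf_ok[OF i] upf_ok[OF i] upf_ok[OF i] trans.IH(1)[rule_format, OF i] trans.IH(2)[rule_format, OF i]])
  qed
next
  case (join_ub1 s t) show ?case
  proof (intro ballI)
    fix i assume i: "i \<in> I"
    interpret zlat "Ls i" z using Z i by blast
    show "leo (Ls i) (upf I Ls z s i) (upf I Ls z (Join s t) i)"
      unfolding upf.simps(2) by (rule ojoin_ub1[OF upf_ok[OF i] upf_ok[OF i]])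
  qed
next
  case (join_ub2 t s) show ?case
  proof (intro ballI)
    fix i assume i: "i \<in> I"
    interpret zlat "Ls i" z using Z i by blast
    show "leo (Ls i) (upf I Ls z t i) (upf I Ls z (Join s t) i)"
      unfolding upf.simps(2) by (rule ojoin_ub2[OF upf_ok[OF i] upf_ok[OF i]])
  qed
next
  case (join_lub s u t) show ?case
  proof (intro ballI)
    fix i assume i: "i \<in> I"
    interpret zlat "Ls i" z using Z i by blast
    show "leo (Ls i) (upf I Ls z (Join s t) i) (upf I Ls z u i)"
      unfolding upf.simps(2) by (rule ojoin_lub[OF upf_ok[OF i] upf_ok[OF i] upf_ok[OF i] join_lub.IH(1)[rule_format, OF i] join_lub.IH(2)[rule_format, OF i]])
  qed
next
  case (meet_lb1 s t) show ?case
  proof (intro ballI)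
    fix i assume i: "i \<in> I"
    interpret zlat "Ls i" z using Z i by blast
    show "leo (Ls i) (upf I Ls z (Meet s t) i) (upf I Ls z s i)"
      using upf_Meet_cases[of s t i] omeet_lb1[OF upf_ok[OF i] upf_ok[OF i]] leo_z[OF upf_ok[OF i]] by auto
  qed
next
  case (meet_lb2 s t) show ?case
  proof (intro ballI)
    fix i assume i: "i \<in> I"
    interpret zlat "Ls i" z using Z i by blast
    show "leo (Ls i) (upf I Ls z (Meet s t) i) (upf I Ls z t i)"
      using upf_Meet_cases[of s t i] omeet_lb2[OF upf_ok[OF i] upf_ok[OF i]] leo_z[OF upf_ok[OF i]] by auto
  qed
next
  case (meet_glb u s t) show ?case
  proof (intro ballI)
    fix i assume i: "i \<in> I"
    interpret zlat "Ls i" z using Z i by blast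
    show "leo (Ls i) (upf I Ls z u i) (upf I Ls z (Meet s t) i)"
    proof (cases "\<exists>j\<in>I. omeet (Ls j) (upf I Ls z s j) (upf I Ls z t j) = Some z")
      case True
      then obtain j where j: "j \<in> I" "omeet (Ls j) (upf I Ls z s j) (upf I Ls z t j) = Some z" by blast
      interpret J: zlat "Ls j" z using Z j by blast
      have "leo (Ls j) (upf I Ls z u j) (omeet (Ls j) (upf I Ls z s j) (upf I Ls z t j))"
        by (rule J.omeet_glb[OF upf_ok[OF j(1)] upf_ok[OF j(1)] upf_ok[OF j(1)] meet_glb.IH(1)[rule_format, OF j(1)] meet_glb.IH(2)[rule_format, OF j(1)]])
      then have "leo (Ls j) (upf I Ls z u j) (Some z)" using j(2) by simp
      then have "upf I Ls z u j = Some z" by (rule J.leo_Some_z[OF upf_ok[OF j(1)]])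
      then have e1: "upf I Ls z u i = Some z" using upf_Z j(1) i by blast
      have e2: "upf I Ls z (Meet s t) i = Some z" using True by simp
      show ?thesis unfolding e1 e2 by (rule leo_z) (simp add: okC_def zC)
    next
      case False
      then have e: "upf I Ls z (Meet s t) i = omeet (Ls i) (upf I Ls z s i) (upf I Ls z t i)" by simp
      show ?thesis unfolding e
        by (rule omeet_glb[OF upf_ok[OF i] upf_ok[OF i] upf_ok[OF i] meet_glb.IH(1)[rule_format, OF i] meet_glb.IH(2)[rule_format, OF i]])
    qed
  qed
next
  case (gen_join1 k a b) show ?case
  proof (intro ballI)
    fix i assume i: "i \<in> I"
    interpret zlat "Ls i" z using Z i by blast
    have e: "upf I Ls z (Join (Gen a) (Gen b)) i = upf I Ls z (Gen (a \<squnion>\<^bsub>Ls k\<^esub> b)) i"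
      using joinGen[OF gen_join1(1-3) i] by blast
    show "leo (Ls i) (upf I Ls z (Gen (a \<squnion>\<^bsub>Ls k\<^esub> b)) i) (upf I Ls z (Join (Gen a) (Gen b)) i)"
      unfolding e by (rule leo_refl[OF upf_ok[OF i]])
  qed
next
  case (gen_join2 k a b) show ?case
  proof (intro ballI)
    fix i assume i: "i \<in> I"
    interpret zlat "Ls i" z using Z i by blast
    have e: "upf I Ls z (Join (Gen a) (Gen b)) i = upf I Ls z (Gen (a \<squnion>\<^bsub>Ls k\<^esub> b)) i"
      using joinGen[OF gen_join2(1-3) i] by blast
    show "leo (Ls i) (upf I Ls z (Join (Gen a) (Gen b)) i) (upf I Ls z (Gen (a \<squnion>\<^bsub>Ls k\<^esub> b)) i)"
      unfolding e by (rule leo_refl[OF upf_ok[OF i]])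
  qed
next
  case (gen_meet1 k a b) show ?case
  proof (intro ballI)
    fix i assume i: "i \<in> I"
    interpret zlat "Ls i" z using Z i by blast
    have e: "upf I Ls z (Meet (Gen a) (Gen b)) i = upf I Ls z (Gen (a \<sqinter>\<^bsub>Ls k\<^esub> b)) i"
      using meetGen[OF gen_meet1(1-3) i] by blast
    show "leo (Ls i) (upf I Ls z (Gen (a \<sqinter>\<^bsub>Ls k\<^esub> b)) i) (upf I Ls z (Meet (Gen a) (Gen b)) i)"
      unfolding e by (rule leo_refl[OF upf_ok[OF i]])
  qed
next
  case (gen_meet2 k a b) show ?case
  proof (intro ballI)
    fix i assume i: "i \<in> I"
    interpret zlat "Ls i" z using Z i by blast
    have e: "upf I Ls z (Meet (Gen a) (Gen b)) i = upf I Ls z (Gen (a \<sqinter>\<^bsub>Ls k\<^esub> b)) i"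
      using meetGen[OF gen_meet2(1-3) i] by blast
    show "leo (Ls i) (upf I Ls z (Meet (Gen a) (Gen b)) i) (upf I Ls z (Gen (a \<sqinter>\<^bsub>Ls k\<^esub> b)) i)"
      unfolding e by (rule leo_refl[OF upf_ok[OF i]])
  qed
next
  case (zero_least t) show ?case
  proof (intro ballI)
    fix i assume i: "i \<in> I"
    interpret zlat "Ls i" z using Z i by blast
    have e: "upf I Ls z (Gen z) i = Some z" using zC by simp
    show "leo (Ls i) (upf I Ls z (Gen z) i) (upf I Ls z t i)"
      unfolding e by (rule leo_z[OF upf_ok[OF i]])
  qed
qed

lemma E: assumes i: "i \<in> I" and ab: "a \<in> carrier (Ls i)" "b \<in> carrier (Ls i)" and le: "a \<sqsubseteq>\<^bsub>Ls i\<^esub> b"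
  shows "cop_le I Ls z (Gen a) (Gen b)"
proof -
  interpret zlat "Ls i" z using Z i by blast
  have e: "a \<sqinter>\<^bsub>Ls i\<^esub> b = a" using le_iff_join[OF ab] le by simp
  have "cop_le I Ls z (Gen (a \<sqinter>\<^bsub>Ls i\<^esub> b)) (Meet (Gen a) (Gen b))" by (rule cop_le.gen_meet1[where Ls=Ls, OF i ab])
  then have "cop_le I Ls z (Gen a) (Meet (Gen a) (Gen b))" unfolding e .
  then show ?thesis by (rule cop_le.trans) (rule cop_le.meet_lb2)
qed

lemma B_lo: "i \<in> I \<Longrightarrow> cop_le I Ls z (Gen (lof I Ls z i x)) x"
proof (induction x)
  case (Gen a) then show ?case by (auto intro: cop_le.refl cop_le.zero_least)
next
  case (Join x y)
  have "cop_le I Ls z (Gen (lof I Ls z i x \<squnion>\<^bsub>Ls i\<^esub> lof I Ls z i y)) (Join (Gen (lof I Ls z i x)) (Gen (lof I Ls z i y)))"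
    by (rule cop_le.gen_join1[where Ls=Ls, OF Join.prems lof_C[OF Join.prems] lof_C[OF Join.prems]])
  moreover have "cop_le I Ls z (Join (Gen (lof I Ls z i x)) (Gen (lof I Ls z i y))) (Join x y)"
    using Join by (meson cop_le.join_lub cop_le.trans cop_le.join_ub1 cop_le.join_ub2)
  ultimately show ?case by (simp add: cop_le.trans)
next
  case (Meet x y)
  have "cop_le I Ls z (Gen (lof I Ls z i x \<sqinter>\<^bsub>Ls i\<^esub> lof I Ls z i y)) (Meet (Gen (lof I Ls z i x)) (Gen (lof I Ls z i y)))"
    by (rule cop_le.gen_meet1[where Ls=Ls, OF Meet.prems lof_C[OF Meet.prems] lof_C[OF Meet.prems]])
  moreover have "cop_le I Ls z (Meet (Gen (lof I Ls z i x)) (Gen (lof I Ls z i y))) (Meet x y)"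
    using Meet by (meson cop_le.meet_glb cop_le.trans cop_le.meet_lb1 cop_le.meet_lb2)
  ultimately show ?case by (simp add: cop_le.trans)
qed

lemma omeetB: assumes j: "j \<in> I"
  and hx: "\<And>b. upf I Ls z x j = Some b \<Longrightarrow> cop_le I Ls z x (Gen b)"
  and hy: "\<And>b. upf I Ls z y j = Some b \<Longrightarrow> cop_le I Ls z y (Gen b)"
  and c: "omeet (Ls j) (upf I Ls z x j) (upf I Ls z y j) = Some c"
  shows "cop_le I Ls z (Meet x y) (Gen c)"
proof (cases "upf I Ls z x j")
  case None
  then have "upf I Ls z y j = Some c" using c by (simp add: omeet_def)
  then show ?thesis using hy cop_le.trans cop_le.meet_lb2 by metis
next
  case (Some a)
  show ?thesis
  proof (cases "upf I Ls z y j")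
    case None
    then have "upf I Ls z x j = Some c" using c Some by (simp add: omeet_def)
    then show ?thesis using hx cop_le.trans cop_le.meet_lb1 by metis
  next
    case (Some b)
    have ab: "a \<in> carrier (Ls j)" "b \<in> carrier (Ls j)" using upf_ok[OF j, of x] upf_ok[OF j, of y] Some \<open>upf I Ls z x j = Some a\<close>
      by (simp_all add: okC_def)
    have ce: "c = a \<sqinter>\<^bsub>Ls j\<^esub> b" using c Some \<open>upf I Ls z x j = Some a\<close> by (simp add: omeet_def)
    have "cop_le I Ls z (Meet x y) (Meet (Gen a) (Gen b))"
      using hx[OF \<open>upf I Ls z x j = Some a\<close>] hy[OF Some]
      by (meson cop_le.meet_glb cop_le.trans cop_le.meet_lb1 cop_le.meet_lb2)
    moreover have "cop_le I Ls z (Meet (Gen a) (Gen b)) (Gen c)" unfolding ce by (rule cop_le.gen_meet2[where Ls=Ls, OF j ab])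
    ultimately show ?thesis by (rule cop_le.trans)
  qed
qed

lemma B_up: "i \<in> I \<Longrightarrow> upf I Ls z x i = Some b \<Longrightarrow> cop_le I Ls z x (Gen b)"
proof (induction x arbitrary: i b)
  case (Gen a) then show ?case by (auto intro: cop_le.refl split: if_splits)
next
  case (Join x y)
  obtain a c where ac: "upf I Ls z x i = Some a" "upf I Ls z y i = Some c" "b = a \<squnion>\<^bsub>Ls i\<^esub> c"
    using Join.prems(2) by (simp add: ojoin_def split: option.splits)
  have ab: "a \<in> carrier (Ls i)" "c \<in> carrier (Ls i)" using upf_ok[OF Join.prems(1), of x] upf_ok[OF Join.prems(1), of y] ac
    by (simp_all add: okC_def)
  have "cop_le I Ls z (Join x y) (Join (Gen a) (Gen c))"
    using Join.IH(1)[OF Join.prems(1) ac(1)] Join.IH(2)[OF Join.prems(1) ac(2)]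
    by (meson cop_le.join_lub cop_le.trans cop_le.join_ub1 cop_le.join_ub2)
  moreover have "cop_le I Ls z (Join (Gen a) (Gen c)) (Gen b)" unfolding ac(3) by (rule cop_le.gen_join2[where Ls=Ls, OF Join.prems(1) ab])
  ultimately show ?case by (rule cop_le.trans)
next
  case (Meet x y)
  show ?case
  proof (cases "\<exists>j\<in>I. omeet (Ls j) (upf I Ls z x j) (upf I Ls z y j) = Some z")
    case True
    then obtain j where j: "j \<in> I" "omeet (Ls j) (upf I Ls z x j) (upf I Ls z y j) = Some z" by blast
    have "b = z" using Meet.prems True by simp
    then show ?thesis using omeetB[OF j(1) Meet.IH(1)[OF j(1)] Meet.IH(2)[OF j(1)] j(2)] by simp
  next
    case False
    then have "omeet (Ls i) (upf I Ls z x i) (upf I Ls z y i) = Some b" using Meet.prems by simp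
    then show ?thesis using omeetB[OF Meet.prems(1) Meet.IH(1)[OF Meet.prems(1)] Meet.IH(2)[OF Meet.prems(1)]] by blast
  qed
qed

lemma bar_okC: "u \<in> bar_carrier K \<longleftrightarrow> okC K u"
  by (cases u) (auto simp: bar_carrier_def okC_def)

lemma lowP: "i \<in> I \<Longrightarrow> is_lower_proj I Ls z i x (lof I Ls z i x)"
proof -
  assume i: "i \<in> I"
  have "cop_le I Ls z (Gen b) (Gen (lof I Ls z i x))" if b: "b \<in> carrier (Ls i)" "cop_le I Ls z (Gen b) x" for b
  proof -
    have "lof I Ls z i (Gen b) \<sqsubseteq>\<^bsub>Ls i\<^esub> lof I Ls z i x" by (rule S_lo[OF b(2) i])
    then have "b \<sqsubseteq>\<^bsub>Ls i\<^esub> lof I Ls z i x" using b by simp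
    then show ?thesis by (rule E[OF i b(1) lof_C[OF i]])
  qed
  then show ?thesis unfolding is_lower_proj_def using lof_C[OF i] B_lo[OF i] by blast
qed

lemma upP: "i \<in> I \<Longrightarrow> is_upper_proj I Ls z i x (upf I Ls z x i)"
proof -
  assume i: "i \<in> I"
  interpret zlat "Ls i" z using Z i by blast
  have t: "cop_le_top I Ls z x (upf I Ls z x i)"
    by (cases "upf I Ls z x i") (auto simp: cop_le_top_def intro: B_up[OF i])
  have "ole_top I Ls z (upf I Ls z x i) v" if v: "v \<in> bar_carrier (Ls i)" "cop_le_top I Ls z x v" for v
  proof (cases v)
    case None then show ?thesis by (simp add: ole_top_def)
  next
    case (Some b)
    have bC: "b \<in> carrier (Ls i)" using v(1) Some by (simp add: bar_okC okC_def)
    have "cop_le I Ls z x (Gen b)" using v(2) Some by (simp add: cop_le_top_def)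
    then have "leo (Ls i) (upf I Ls z x i) (upf I Ls z (Gen b) i)" using S_up i by blast
    then have "leo (Ls i) (upf I Ls z x i) (Some b)" using bC by simp
    then obtain a where a: "upf I Ls z x i = Some a" "a \<sqsubseteq>\<^bsub>Ls i\<^esub> b"
      by (auto simp: leo_def split: option.splits)
    have aC: "a \<in> carrier (Ls i)" using upf_ok[OF i, of x] a by (simp add: okC_def)
    show ?thesis using E[OF i aC bC a(2)] a Some by (simp add: ole_top_def)
  qed
  then show ?thesis unfolding is_upper_proj_def using t upf_ok[OF i] bar_okC by blast
qed

lemma lo_uniq: assumes i: "i \<in> I" and h: "is_lower_proj I Ls z i x a" shows "a = lof I Ls z i x"
proof -
  interpret zlat "Ls i" z using Z i by blast
  have aC: "a \<in> carrier (Ls i)" and ax: "cop_le I Ls z (Gen a) x"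
    and au: "\<And>b. b \<in> carrier (Ls i) \<Longrightarrow> cop_le I Ls z (Gen b) x \<Longrightarrow> cop_le I Ls z (Gen b) (Gen a)"
    using h unfolding is_lower_proj_def by blast+
  have l: "is_lower_proj I Ls z i x (lof I Ls z i x)" by (rule lowP[OF i])
  have "cop_le I Ls z (Gen a) (Gen (lof I Ls z i x))" using l aC ax unfolding is_lower_proj_def by blast
  from S_lo[OF this i] have 1: "a \<sqsubseteq>\<^bsub>Ls i\<^esub> lof I Ls z i x" using aC lof_C[OF i] by simp
  have "cop_le I Ls z (Gen (lof I Ls z i x)) (Gen a)" using au lof_C[OF i] B_lo[OF i] by blast
  from S_lo[OF this i] have 2: "lof I Ls z i x \<sqsubseteq>\<^bsub>Ls i\<^esub> a" using aC lof_C[OF i] by simp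
  show ?thesis using 1 2 aC lof_C[OF i] le_antisym by blast
qed

lemma ole2leo: assumes i: "i \<in> I" and u: "okC (Ls i) u" and v: "okC (Ls i) v" and o: "ole_top I Ls z u v"
  shows "leo (Ls i) u v"
proof (cases v)
  case None then show ?thesis by (simp add: leo_def)
next
  case (Some b)
  then obtain a where a: "u = Some a" "cop_le I Ls z (Gen a) (Gen b)" using o
    by (auto simp: ole_top_def split: option.splits)
  have "leo (Ls i) (upf I Ls z (Gen a) i) (upf I Ls z (Gen b) i)" using S_up[OF a(2)] i by blast
  then show ?thesis using a u v Some by (simp add: okC_def)
qed

lemma up_uniq: assumes i: "i \<in> I" and h: "is_upper_proj I Ls z i x u" shows "u = upf I Ls z x i"
proof -
  interpret zlat "Ls i" z using Z i by blast
  have l: "is_upper_proj I Ls z i x (upf I Ls z x i)" by (rule upP[OF i])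
  have uo: "okC (Ls i) u" using h bar_okC unfolding is_upper_proj_def by blast
  have 1: "ole_top I Ls z u (upf I Ls z x i)" using h l unfolding is_upper_proj_def by blast
  have 2: "ole_top I Ls z (upf I Ls z x i) u" using h l unfolding is_upper_proj_def by blast
  show ?thesis using leo_antisym[OF uo upf_ok[OF i] ole2leo[OF i uo upf_ok[OF i] 1] ole2leo[OF i upf_ok[OF i] uo 2]] .
qed

end

theorem lemma4p1:
  fixes I :: "'i set" and Ls :: "'i \<Rightarrow> 'a gorder" and z :: 'a
  assumes lat: "\<And>i. i \<in> I \<Longrightarrow> lattice (Ls i)"
    and zero: "\<And>i. i \<in> I \<Longrightarrow> least (Ls i) z (carrier (Ls i))"
    and disj: "\<And>i j. i \<in> I \<Longrightarrow> j \<in> I \<Longrightarrow> i \<noteq> j \<Longrightarrow> carrier (Ls i) \<inter> carrier (Ls j) = {z}"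
  shows "(\<forall>i\<in>I. \<forall>x\<in>cop_terms I Ls z.
           (\<exists>a. is_lower_proj I Ls z i x a) \<and> (\<exists>u. is_upper_proj I Ls z i x u))
     \<and> (\<forall>lo up.
         (\<forall>i\<in>I. \<forall>x\<in>cop_terms I Ls z. is_lower_proj I Ls z i x (lo i x)) \<and>
         (\<forall>i\<in>I. \<forall>x\<in>cop_terms I Ls z. is_upper_proj I Ls z i x (up i x)) \<longrightarrow>
         (\<forall>i\<in>I. \<forall>p\<in>carrier (Ls i). lo i (Gen p) = p \<and> up i (Gen p) = Some p)
       \<and> (\<forall>i\<in>I. \<forall>p\<in>(\<Union>j\<in>I. carrier (Ls j)) - carrier (Ls i). lo i (Gen p) = z \<and> up i (Gen p) = None)
       \<and> (\<forall>i\<in>I. \<forall>x\<in>cop_terms I Ls z. \<forall>y\<in>cop_terms I Ls z.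
             lo i (Join x y) = lo i x \<squnion>\<^bsub>Ls i\<^esub> lo i y \<and> lo i (Meet x y) = lo i x \<sqinter>\<^bsub>Ls i\<^esub> lo i y)
       \<and> (\<forall>i\<in>I. \<forall>x\<in>cop_terms I Ls z. \<forall>y\<in>cop_terms I Ls z.
             up i (Join x y) = ojoin (Ls i) (up i x) (up i y))
       \<and> (\<forall>i\<in>I. \<forall>x\<in>cop_terms I Ls z. \<forall>y\<in>cop_terms I Ls z.
             up i (Meet x y) = (if \<exists>j\<in>I. omeet (Ls j) (up j x) (up j y) = Some z then Some z
                                else omeet (Ls i) (up i x) (up i y))))"
proof -
  have ct: "\<And>x y. Join x y \<in> cop_terms I Ls z \<longleftrightarrow> x \<in> cop_terms I Ls z \<and> y \<in> cop_terms I Ls z"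
    "\<And>x y. Meet x y \<in> cop_terms I Ls z \<longleftrightarrow> x \<in> cop_terms I Ls z \<and> y \<in> cop_terms I Ls z"
    by (auto simp: cop_terms_def)
  have cg: "\<And>p j. j \<in> I \<Longrightarrow> p \<in> carrier (Ls j) \<Longrightarrow> Gen p \<in> cop_terms I Ls z"
    by (auto simp: cop_terms_def cop_gens_def)
  show ?thesis
  proof (intro conjI allI impI)
    show "\<forall>i\<in>I. \<forall>x\<in>cop_terms I Ls z. (\<exists>a. is_lower_proj I Ls z i x a) \<and> (\<exists>u. is_upper_proj I Ls z i x u)"
      using lowP[where I=I and Ls=Ls and z=z, OF lat zero disj] upP[where I=I and Ls=Ls and z=z, OF lat zero disj] by blast
  next
    fix lo up
    assume H: "(\<forall>i\<in>I. \<forall>x\<in>cop_terms I Ls z. is_lower_proj I Ls z i x (lo i x)) \<and>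
         (\<forall>i\<in>I. \<forall>x\<in>cop_terms I Ls z. is_upper_proj I Ls z i x (up i x))"
    have lo_e: "\<And>i x. i \<in> I \<Longrightarrow> x \<in> cop_terms I Ls z \<Longrightarrow> lo i x = lof I Ls z i x"
      using H lo_uniq[where I=I and Ls=Ls and z=z, OF lat zero disj] by blast
    have up_e: "\<And>i x. i \<in> I \<Longrightarrow> x \<in> cop_terms I Ls z \<Longrightarrow> up i x = upf I Ls z x i"
      using H up_uniq[where I=I and Ls=Ls and z=z, OF lat zero disj] by blast
    show "\<forall>i\<in>I. \<forall>p\<in>carrier (Ls i). lo i (Gen p) = p \<and> up i (Gen p) = Some p"
      using lo_e up_e cg by simp
    show "\<forall>i\<in>I. \<forall>p\<in>(\<Union>j\<in>I. carrier (Ls j)) - carrier (Ls i). lo i (Gen p) = z \<and> up i (Gen p) = None"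
    proof (intro ballI)
      fix i p assume i: "i \<in> I" and p: "p \<in> (\<Union>j\<in>I. carrier (Ls j)) - carrier (Ls i)"
      then obtain j where j: "j \<in> I" "p \<in> carrier (Ls j)" "p \<notin> carrier (Ls i)" by blast
      have zi: "z \<in> carrier (Ls i)" using zero[OF i] by (simp add: least_def)
      have "j \<noteq> i" using j by blast
      from G[where I=I and Ls=Ls and z=z, OF lat zero disj j(1) i this j(2)] j zi
      show "lo i (Gen p) = z \<and> up i (Gen p) = None" using lo_e[OF i cg[OF j(1,2)]] up_e[OF i cg[OF j(1,2)]]
        by auto
    qed
    show "\<forall>i\<in>I. \<forall>x\<in>cop_terms I Ls z. \<forall>y\<in>cop_terms I Ls z.
             lo i (Join x y) = lo i x \<squnion>\<^bsub>Ls i\<^esub> lo i y \<and> lo i (Meet x y) = lo i x \<sqinter>\<^bsub>Ls i\<^esub> lo i y"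
      using lo_e ct by simp
    show "\<forall>i\<in>I. \<forall>x\<in>cop_terms I Ls z. \<forall>y\<in>cop_terms I Ls z.
             up i (Join x y) = ojoin (Ls i) (up i x) (up i y)"
      using up_e ct by simp
    show "\<forall>i\<in>I. \<forall>x\<in>cop_terms I Ls z. \<forall>y\<in>cop_terms I Ls z.
             up i (Meet x y) = (if \<exists>j\<in>I. omeet (Ls j) (up j x) (up j y) = Some z then Some z
                                else omeet (Ls i) (up i x) (up i y))"
      using up_e ct by simp
  qed
qed

end
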